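(* Let $\beta\in\mathbb C$ and $m\ge0$. If $\beta$ is reproducible of order $m$ in $\mathcal H$, then $\beta$ is reproducible of order $j$ for every integer $0\le j\le m$.
   Context: Standing assumptions: $\Omega\subset\mathbb C$ is a domain with $0\in\Omega$, and $\mathcal H$ is a Hilbert space of analytic functions on $\Omega$ in which every point evaluation at points of $\Omega$ is bounded; the shift $(Sf)(z)=zf(z)$ is bounded on $\mathcal H$; and the polynomials $\mathcal P$ are dense in $\mathcal H$. A point $\beta\in\mathbb C$ (not necessarily in $\Omega$) is reproducible of order $m\ge0$ in $\mathcal H$ if the linear functional $p\mapsto p^{(m)}(\beta)$ on $\mathcal P$ extends to a bounded linear functional on $\mathcal H$. *)

theory Defs
  imports "HOL-Analysis.Analysis" "HOL-Computational_Algebra.Polynomial"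
begin

text \<open>A Hilbert space of analytic functions on \<Omega> is modelled concretely as a set H of
  functions complex \<Rightarrow> complex (each holomorphic on \<Omega> and normalised to vanish off \<Omega>, so
  that functions agreeing on \<Omega> are identified), together with a complex inner product ip
  on H.\<close>

definition hnorm :: "((complex \<Rightarrow> complex) \<Rightarrow> (complex \<Rightarrow> complex) \<Rightarrow> complex)
    \<Rightarrow> (complex \<Rightarrow> complex) \<Rightarrow> real" where
  "hnorm ip f = sqrt (Re (ip f f))"

definition restr :: "complex set \<Rightarrow> (complex \<Rightarrow> complex) \<Rightarrow> complex \<Rightarrow> complex" where
  "restr \<Omega> f = (\<lambda>z. if z \<in> \<Omega> then f z else 0)"

definition polyH :: "complex set \<Rightarrow> complex poly \<Rightarrow> complex \<Rightarrow> complex" where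
  "polyH \<Omega> p = restr \<Omega> (poly p)"

definition shiftH :: "complex set \<Rightarrow> (complex \<Rightarrow> complex) \<Rightarrow> complex \<Rightarrow> complex" where
  "shiftH \<Omega> f = restr \<Omega> (\<lambda>z. z * f z)"

definition bounded_lin_functional ::
  "(complex \<Rightarrow> complex) set \<Rightarrow> ((complex \<Rightarrow> complex) \<Rightarrow> (complex \<Rightarrow> complex) \<Rightarrow> complex)
    \<Rightarrow> ((complex \<Rightarrow> complex) \<Rightarrow> complex) \<Rightarrow> bool" where
  "bounded_lin_functional H ip L \<longleftrightarrow>
     (\<forall>f\<in>H. \<forall>g\<in>H. L (\<lambda>z. f z + g z) = L f + L g) \<and>
     (\<forall>c. \<forall>f\<in>H. L (\<lambda>z. c * f z) = c * L f) \<and>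
     (\<exists>C. \<forall>f\<in>H. cmod (L f) \<le> C * hnorm ip f)"

definition analytic_hilbert_space ::
  "complex set \<Rightarrow> (complex \<Rightarrow> complex) set
    \<Rightarrow> ((complex \<Rightarrow> complex) \<Rightarrow> (complex \<Rightarrow> complex) \<Rightarrow> complex) \<Rightarrow> bool" where
  "analytic_hilbert_space \<Omega> H ip \<longleftrightarrow>
     \<comment> \<open>\<Omega> is a domain containing 0\<close>
     open \<Omega> \<and> connected \<Omega> \<and> 0 \<in> \<Omega> \<and>
     \<comment> \<open>elements of H are analytic functions on \<Omega>\<close>
     (\<forall>f\<in>H. f holomorphic_on \<Omega> \<and> (\<forall>z. z \<notin> \<Omega> \<longrightarrow> f z = 0)) \<and>
     \<comment> \<open>H is a complex vector space\<close>
     (\<lambda>z. 0) \<in> H \<and>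
     (\<forall>f\<in>H. \<forall>g\<in>H. (\<lambda>z. f z + g z) \<in> H) \<and>
     (\<forall>c. \<forall>f\<in>H. (\<lambda>z. c * f z) \<in> H) \<and>
     \<comment> \<open>ip is an inner product on H\<close>
     (\<forall>f\<in>H. \<forall>g\<in>H. \<forall>h\<in>H. ip (\<lambda>z. f z + g z) h = ip f h + ip g h) \<and>
     (\<forall>c. \<forall>f\<in>H. \<forall>g\<in>H. ip (\<lambda>z. c * f z) g = c * ip f g) \<and>
     (\<forall>f\<in>H. \<forall>g\<in>H. ip g f = cnj (ip f g)) \<and>
     (\<forall>f\<in>H. Im (ip f f) = 0 \<and> Re (ip f f) \<ge> 0) \<and>
     (\<forall>f\<in>H. ip f f = 0 \<longrightarrow> f = (\<lambda>z. 0)) \<and>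
     \<comment> \<open>H is complete\<close>
     (\<forall>s. (\<forall>n. s n \<in> H) \<and>
          (\<forall>e>0. \<exists>N. \<forall>n\<ge>N. \<forall>k\<ge>N. hnorm ip (\<lambda>z. s n z - s k z) < e)
        \<longrightarrow> (\<exists>f\<in>H. (\<lambda>n. hnorm ip (\<lambda>z. s n z - f z)) \<longlonglongrightarrow> 0)) \<and>
     \<comment> \<open>point evaluations at points of \<Omega> are bounded\<close>
     (\<forall>w\<in>\<Omega>. \<exists>C. \<forall>f\<in>H. cmod (f w) \<le> C * hnorm ip f) \<and>
     \<comment> \<open>the shift is a bounded operator on H\<close>
     (\<forall>f\<in>H. shiftH \<Omega> f \<in> H) \<and>
     (\<exists>C. \<forall>f\<in>H. hnorm ip (shiftH \<Omega> f) \<le> C * hnorm ip f) \<and>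
     \<comment> \<open>the polynomials lie in H and are dense\<close>
     (\<forall>p. polyH \<Omega> p \<in> H) \<and>
     (\<forall>f\<in>H. \<forall>e>0. \<exists>p. hnorm ip (\<lambda>z. f z - polyH \<Omega> p z) < e)"

definition reproducible ::
  "complex set \<Rightarrow> (complex \<Rightarrow> complex) set
    \<Rightarrow> ((complex \<Rightarrow> complex) \<Rightarrow> (complex \<Rightarrow> complex) \<Rightarrow> complex) \<Rightarrow> complex \<Rightarrow> nat \<Rightarrow> bool" where
  "reproducible \<Omega> H ip \<beta> m \<longleftrightarrow>
     (\<exists>L. bounded_lin_functional H ip L \<and>
          (\<forall>p. L (polyH \<Omega> p) = poly ((pderiv ^^ m) p) \<beta>))"

end

theory Submission
  imports Defs
begin

lemma pderiv_iter_x: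
  "(pderiv ^^ Suc k) ([:0,1:] * p) = [:0,1:] * (pderiv ^^ Suc k) p + smult (of_nat (Suc k)) ((pderiv ^^ k) p)"
proof (induction k)
  case 0
  show ?case by (simp add: pderiv_mult pderiv_pCons add.commute)
next
  case (Suc k)
  have "(pderiv ^^ Suc (Suc k)) ([:0,1:] * p) = pderiv ((pderiv ^^ Suc k) ([:0,1:] * p))" by simp
  also have "\<dots> = pderiv ([:0,1:] * (pderiv ^^ Suc k) p) + smult (of_nat (Suc k)) (pderiv ((pderiv ^^ k) p))"
    by (simp only: Suc pderiv_add pderiv_smult)
  also have "\<dots> = [:0,1:] * (pderiv ^^ Suc (Suc k)) p + smult (of_nat (Suc (Suc k))) ((pderiv ^^ Suc k) p)"
    by (simp add: pderiv_mult pderiv_pCons algebra_simps smult_add_left)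
  finally show ?case .
qed

lemma step:
  assumes A: "analytic_hilbert_space \<Omega> H ip"
    and R: "reproducible \<Omega> H ip \<beta> (Suc k)"
  shows "reproducible \<Omega> H ip \<beta> k"
proof -
  from R obtain L where bl: "bounded_lin_functional H ip L"
    and Lp: "\<And>p. L (polyH \<Omega> p) = poly ((pderiv ^^ Suc k) p) \<beta>"
    unfolding reproducible_def by blast
  from bl have add: "\<And>f g. f \<in> H \<Longrightarrow> g \<in> H \<Longrightarrow> L (\<lambda>z. f z + g z) = L f + L g"
    and mul: "\<And>c f. f \<in> H \<Longrightarrow> L (\<lambda>z. c * f z) = c * L f"
    and "\<exists>C. \<forall>f\<in>H. cmod (L f) \<le> C * hnorm ip f"
    unfolding bounded_lin_functional_def by blast+
  then obtain C0 where C0: "\<And>f. f \<in> H \<Longrightarrow> cmod (L f) \<le> C0 * hnorm ip f" by blast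
  define C where "C = max C0 0"
  have hn: "\<And>f. f \<in> H \<Longrightarrow> hnorm ip f \<ge> 0" 
  proof -
    fix f assume "f \<in> H"
    from A have "\<forall>f\<in>H. Im (ip f f) = 0 \<and> Re (ip f f) \<ge> 0" unfolding analytic_hilbert_space_def by blast
    with \<open>f \<in> H\<close> show "hnorm ip f \<ge> 0" unfolding hnorm_def by simp
  qed
  have C: "\<And>f. f \<in> H \<Longrightarrow> cmod (L f) \<le> C * hnorm ip f" "C \<ge> 0"
  proof -
    fix f assume "f \<in> H"
    have "C0 * hnorm ip f \<le> C * hnorm ip f" unfolding C_def
      by (intro mult_right_mono) (auto simp: hn \<open>f \<in> H\<close>)
    then show "cmod (L f) \<le> C * hnorm ip f" using C0[OF \<open>f \<in> H\<close>] by linarith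
  qed (simp add: C_def)
  from A have SH: "\<And>f. f \<in> H \<Longrightarrow> shiftH \<Omega> f \<in> H"
    and "\<exists>C. \<forall>f\<in>H. hnorm ip (shiftH \<Omega> f) \<le> C * hnorm ip f"
    unfolding analytic_hilbert_space_def by blast+
  then obtain Cs where Cs: "\<And>f. f \<in> H \<Longrightarrow> hnorm ip (shiftH \<Omega> f) \<le> Cs * hnorm ip f" by blast
  define L' where "L' f = (L (shiftH \<Omega> f) - \<beta> * L f) / of_nat (Suc k)" for f
  have Sadd: "shiftH \<Omega> (\<lambda>z. f z + g z) = (\<lambda>z. shiftH \<Omega> f z + shiftH \<Omega> g z)" for f g
    by (auto simp: shiftH_def restr_def algebra_simps)
  have Smul: "shiftH \<Omega> (\<lambda>z. c * f z) = (\<lambda>z. c * shiftH \<Omega> f z)" for c f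
    by (auto simp: shiftH_def restr_def algebra_simps)
  have Spoly: "shiftH \<Omega> (polyH \<Omega> p) = polyH \<Omega> ([:0,1:] * p)" for p
    by (auto simp: shiftH_def restr_def polyH_def)
  have "bounded_lin_functional H ip L'"
    unfolding bounded_lin_functional_def
  proof (intro conjI ballI allI)
    fix f g assume "f \<in> H" "g \<in> H"
    then show "L' (\<lambda>z. f z + g z) = L' f + L' g"
      unfolding L'_def Sadd by (simp add: add SH add_divide_distrib[symmetric] algebra_simps)
  next
    fix c f assume "f \<in> H"
    then show "L' (\<lambda>z. c * f z) = c * L' f"
      unfolding L'_def Smul by (simp add: mul SH algebra_simps)
  next
    show "\<exists>C'. \<forall>f\<in>H. cmod (L' f) \<le> C' * hnorm ip f"
    proof (intro exI ballI)
      fix f assume f: "f \<in> H"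
      have "cmod (L (shiftH \<Omega> f) - \<beta> * L f) \<le> cmod (L (shiftH \<Omega> f)) + cmod \<beta> * cmod (L f)"
        by (metis norm_mult norm_triangle_ineq4)
      also have "\<dots> \<le> C * (Cs * hnorm ip f) + cmod \<beta> * (C * hnorm ip f)"
        using C(1)[OF SH[OF f]] Cs[OF f] C(1)[OF f] C(2)
      proof (intro add_mono mult_left_mono)
        show "cmod (L (shiftH \<Omega> f)) \<le> C * (Cs * hnorm ip f)"
          using C(1)[OF SH[OF f]] mult_left_mono[OF Cs[OF f] C(2)] by linarith
      qed (use C(1)[OF f] in auto)
      finally have ineq: "cmod (L (shiftH \<Omega> f) - \<beta> * L f) \<le> C * (Cs * hnorm ip f) + cmod \<beta> * (C * hnorm ip f)" .
      have "cmod (L' f) \<le> (C * (Cs * hnorm ip f) + cmod \<beta> * (C * hnorm ip f)) / real (Suc k)"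
      proof -
        have "cmod (L' f) = cmod (L (shiftH \<Omega> f) - \<beta> * L f) / real (Suc k)"
          unfolding L'_def norm_divide by (simp only: norm_of_nat)
        with ineq show ?thesis by (simp add: divide_right_mono del: of_nat_Suc)
      qed
      then show "cmod (L' f) \<le> ((C * Cs + cmod \<beta> * C) / real (Suc k)) * hnorm ip f"
        by (simp add: algebra_simps)
    qed
  qed
  moreover have "L' (polyH \<Omega> p) = poly ((pderiv ^^ k) p) \<beta>" for p
  proof -
    have nz: "(1::complex) + of_nat k \<noteq> 0"
      by (metis of_nat_Suc of_nat_eq_0_iff nat.distinct(1) add.commute)
    show ?thesis unfolding L'_def Spoly Lp pderiv_iter_x
      using nz by (simp add: field_simps del: funpow.simps)
  qed
  ultimately show ?thesis unfolding reproducible_def by blast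
qed

theorem mainTheorem3:
  fixes \<Omega> :: "complex set" and H :: "(complex \<Rightarrow> complex) set"
    and ip :: "(complex \<Rightarrow> complex) \<Rightarrow> (complex \<Rightarrow> complex) \<Rightarrow> complex"
    and \<beta> :: complex and m :: nat
  assumes "analytic_hilbert_space \<Omega> H ip"
    and "reproducible \<Omega> H ip \<beta> m"
  shows "\<forall>j\<le>m. reproducible \<Omega> H ip \<beta> j"
proof (intro allI impI)
  fix j assume "j \<le> m"
  then obtain d where "m = j + d" using le_Suc_ex by blast
  then show "reproducible \<Omega> H ip \<beta> j" using assms(2)
  proof (induction d arbitrary: m)
    case 0 then show ?case by simp
  next
    case (Suc d)
    have "reproducible \<Omega> H ip \<beta> (Suc (j + d))" using Suc.prems by simp
    then have "reproducible \<Omega> H ip \<beta> (j + d)" by (rule step[OF assms(1)])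
    then show ?case using Suc.IH[of "j + d"] by blast
  qed
qed

end
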